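(* Let $\Lambda\in\mathcal{M}_2$ and $a\in[0,1]$, and let $\widehat{\Lambda}(t):=\Lambda(t,1-t)$ for $t\in[0,1]$. The following are equivalent: (1) the right derivative $\widehat{\Lambda}'(0)$ equals $a$; (2) $\lim_{y\to\infty}\Lambda(x,y)=ax$ for all $x\in\mathbb{R}_+$.
   Context: $\mathcal{M}_2$ is the set of bivariate (lower) tail dependence functions, i.e. functions $\mathbb{R}_+^2\to\mathbb{R}_+$ ($\mathbb{R}_+=[0,\infty)$) of the form $\Lambda(\mathbf{w})=\lim_{s\searrow0}C(s\mathbf{w})/s$ for a $2$-copula $C$ (limit existing for all $\mathbf{w}$). Such $\Lambda$ are concave, $1$-Lipschitz, positively homogeneous of order $1$, and satisfy $0\le\Lambda(w_1,w_2)\le\min\{w_1,w_2\}$. *)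

theory Defs
  imports "HOL-Analysis.Analysis"
begin

text \<open>A 2-copula, as a function on the reals whose behaviour on the unit square
  is constrained: grounded, uniform margins, 2-increasing (values in [0,1] follow).\<close>
definition copula2 :: "(real \<Rightarrow> real \<Rightarrow> real) \<Rightarrow> bool" where
  "copula2 C \<longleftrightarrow>
     (\<forall>u\<in>{0..1}. C u 0 = 0 \<and> C 0 u = 0 \<and> C u 1 = u \<and> C 1 u = u) \<and>
     (\<forall>u1 u2 v1 v2. 0 \<le> u1 \<and> u1 \<le> u2 \<and> u2 \<le> 1 \<and> 0 \<le> v1 \<and> v1 \<le> v2 \<and> v2 \<le> 1 \<longrightarrow>
        C u2 v2 - C u2 v1 - C u1 v2 + C u1 v1 \<ge> 0)"

text \<open>The class M_2 of bivariate lower tail dependence functions: Lambda(w) is the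
  limit of C(s w)/s as s decreases to 0, for every w in R_+^2 (only values on R_+^2 matter).\<close>
definition M2 :: "(real \<Rightarrow> real \<Rightarrow> real) set" where
  "M2 = {\<Lambda>. \<exists>C. copula2 C \<and>
     (\<forall>w1 w2. 0 \<le> w1 \<longrightarrow> 0 \<le> w2 \<longrightarrow>
        ((\<lambda>s. C (s * w1) (s * w2) / s) \<longlongrightarrow> \<Lambda> w1 w2) (at_right 0))}"

end

theory Submission
  imports Defs "HOL-Real_Asymp.Real_Asymp"
begin

lemma M2_hom:
  assumes "\<Lambda> \<in> M2" "c > 0" "w1 \<ge> 0" "w2 \<ge> 0"
  shows "\<Lambda> (c*w1) (c*w2) = c * \<Lambda> w1 w2"
proof -
  obtain C where C: "copula2 C" and L: "\<And>w1 w2. 0 \<le> w1 \<Longrightarrow> 0 \<le> w2 \<Longrightarrow>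
        ((\<lambda>s. C (s * w1) (s * w2) / s) \<longlongrightarrow> \<Lambda> w1 w2) (at_right 0)"
    using assms(1) unfolding M2_def by blast
  have L1: "((\<lambda>s. C (s * (c*w1)) (s * (c*w2)) / s) \<longlongrightarrow> \<Lambda> (c*w1) (c*w2)) (at_right 0)"
    using L assms by simp
  have F: "filterlim (\<lambda>s. s*c) (at_right 0) (at_right (0::real))"
    apply (rule tendsto_imp_filterlim_at_right)
    apply (rule tendsto_eq_intros | simp)+
    unfolding eventually_at_right_field using assms(2) by (intro exI[of _ 1]) auto
  have L2: "((\<lambda>s. C ((s*c) * w1) ((s*c) * w2) / (s*c)) \<longlongrightarrow> \<Lambda> w1 w2) (at_right 0)"
    using filterlim_compose[OF L[OF assms(3,4)] F] by (simp add: o_def)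
  have L3: "((\<lambda>s. c * (C ((s*c) * w1) ((s*c) * w2) / (s*c))) \<longlongrightarrow> c * \<Lambda> w1 w2) (at_right 0)"
    by (intro tendsto_mult L2 tendsto_const)
  have E: "(\<lambda>s. c * (C ((s*c) * w1) ((s*c) * w2) / (s*c))) = (\<lambda>s. C (s * (c*w1)) (s * (c*w2)) / s)"
    using assms(2) by (auto simp: fun_eq_iff field_simps)
  show ?thesis using tendsto_unique[OF trivial_limit_at_right_real L1] L3 E by simp
qed

lemma M2_zero:
  assumes "\<Lambda> \<in> M2" "y \<ge> 0"
  shows "\<Lambda> 0 y = 0"
proof -
  obtain C where C: "copula2 C" and L: "\<And>w1 w2. 0 \<le> w1 \<Longrightarrow> 0 \<le> w2 \<Longrightarrow>
        ((\<lambda>s. C (s * w1) (s * w2) / s) \<longlongrightarrow> \<Lambda> w1 w2) (at_right 0)"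
    using assms(1) unfolding M2_def by blast
  have ev: "eventually (\<lambda>s. C (s * 0) (s * y) / s = 0) (at_right (0::real))"
    unfolding eventually_at_right_field
  proof (intro exI[of _ "1/(y+1)"] conjI allI impI)
    show "(0::real) < 1/(y+1)" using assms by simp
    fix s :: real assume "0 < s" "s < 1/(y+1)"
    then have "s * y \<le> 1" using assms
      by (smt (verit, ccfv_SIG) divide_less_eq mult_left_mono mult.commute)
    moreover have "s * y \<ge> 0" using assms \<open>0<s\<close> by simp
    ultimately show "C (s * 0) (s * y) / s = 0" using C unfolding copula2_def by simp
  qed
  have "((\<lambda>s. C (s * 0) (s * y) / s) \<longlongrightarrow> 0) (at_right 0)"
    using tendsto_eventually[OF ev] .
  then show ?thesis using tendsto_unique[OF trivial_limit_at_right_real L[of 0 y]] assms by simp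
qed

theorem mainTheorem7:
  fixes \<Lambda> :: "real \<Rightarrow> real \<Rightarrow> real" and a :: real
  assumes "\<Lambda> \<in> M2" and "0 \<le> a" and "a \<le> 1"
  shows "((\<lambda>t. \<Lambda> t (1 - t)) has_real_derivative a) (at 0 within {0..1})
     \<longleftrightarrow> (\<forall>x\<ge>0. ((\<lambda>y. \<Lambda> x y) \<longlongrightarrow> a * x) at_top)"
proof -
  have Z: "\<Lambda> 0 1 = 0" using M2_zero[OF assms(1)] by simp
  have D: "((\<lambda>t. \<Lambda> t (1 - t)) has_real_derivative a) (at 0 within {0..1})
      \<longleftrightarrow> ((\<lambda>t. \<Lambda> t (1 - t) / t) \<longlongrightarrow> a) (at_right 0)"
    unfolding has_field_derivative_iff at_within_Icc_at_right[OF zero_less_one] using Z by simp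
  have key: "\<Lambda> t (1 - t) / t = \<Lambda> 1 ((1 - t)/t)" if "0 < t" "t \<le> 1" for t :: real
    using M2_hom[OF assms(1) \<open>0<t\<close>, of 1 "(1-t)/t"] that by simp
  have key2: "\<Lambda> x y = x * \<Lambda> 1 (y/x)" if "0 < x" "0 \<le> y" for x y :: real
    using M2_hom[OF assms(1) \<open>0<x\<close>, of 1 "y/x"] that by simp
  have R: "((\<lambda>t. \<Lambda> t (1 - t) / t) \<longlongrightarrow> a) (at_right 0) \<longleftrightarrow> ((\<lambda>y. \<Lambda> 1 y) \<longlongrightarrow> a) at_top"
  proof
    assume H: "((\<lambda>t. \<Lambda> t (1 - t) / t) \<longlongrightarrow> a) (at_right 0)"
    have F: "filterlim (\<lambda>y. 1/(1+y)) (at_right 0) (at_top::real filter)"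
      by real_asymp
    have "((\<lambda>y. \<Lambda> (1/(1+y)) (1 - 1/(1+y)) / (1/(1+y))) \<longlongrightarrow> a) at_top"
      using filterlim_compose[OF H F] by (simp add: o_def)
    moreover have "eventually (\<lambda>y. \<Lambda> (1/(1+y)) (1 - 1/(1+y)) / (1/(1+y)) = \<Lambda> 1 y) at_top"
      using eventually_gt_at_top[of 0]
    proof eventually_elim
      case (elim y)
      have e1: "(1 - 1/(1+y)) / (1/(1+y)) = y" using elim by (simp add: field_simps)
      show ?case using key[of "1/(1+y)"] elim e1 by simp
    qed
    ultimately show "((\<lambda>y. \<Lambda> 1 y) \<longlongrightarrow> a) at_top" using tendsto_cong by fastforce
  next
    assume H: "((\<lambda>y. \<Lambda> 1 y) \<longlongrightarrow> a) at_top"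
    have F: "filterlim (\<lambda>t. (1-t)/t) at_top (at_right (0::real))"
      by real_asymp
    have "((\<lambda>t. \<Lambda> 1 ((1-t)/t)) \<longlongrightarrow> a) (at_right 0)"
      using filterlim_compose[OF H F] by (simp add: o_def)
    moreover have "eventually (\<lambda>t. \<Lambda> 1 ((1-t)/t) = \<Lambda> t (1 - t) / t) (at_right (0::real))"
      unfolding eventually_at_right_field
      by (intro exI[of _ 1]) (auto simp: key)
    ultimately show "((\<lambda>t. \<Lambda> t (1 - t) / t) \<longlongrightarrow> a) (at_right 0)" using tendsto_cong by fastforce
  qed
  have S: "((\<lambda>y. \<Lambda> 1 y) \<longlongrightarrow> a) at_top \<longleftrightarrow> (\<forall>x\<ge>0. ((\<lambda>y. \<Lambda> x y) \<longlongrightarrow> a * x) at_top)"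
  proof
    assume H: "((\<lambda>y. \<Lambda> 1 y) \<longlongrightarrow> a) at_top"
    show "\<forall>x\<ge>0. ((\<lambda>y. \<Lambda> x y) \<longlongrightarrow> a * x) at_top"
    proof (intro allI impI)
      fix x :: real assume x: "x \<ge> 0"
      show "((\<lambda>y. \<Lambda> x y) \<longlongrightarrow> a * x) at_top"
      proof (cases "x = 0")
        case True
        have "eventually (\<lambda>y. \<Lambda> x y = 0) at_top"
          using eventually_ge_at_top[of 0] by eventually_elim (simp add: True M2_zero[OF assms(1)])
        then show ?thesis using True tendsto_eventually by auto
      next
        case False
        then have xp: "x > 0" using x by simp
        have F: "filterlim (\<lambda>y. y/x) at_top (at_top::real filter)"
          using xp by real_asymp
        have "((\<lambda>y. x * \<Lambda> 1 (y/x)) \<longlongrightarrow> x * a) at_top"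
          using filterlim_compose[OF H F] by (intro tendsto_mult tendsto_const) (simp add: o_def)
        moreover have "eventually (\<lambda>y. x * \<Lambda> 1 (y/x) = \<Lambda> x y) at_top"
          using eventually_ge_at_top[of 0] by eventually_elim (simp add: key2 xp)
        ultimately show ?thesis using tendsto_cong by (fastforce simp: mult.commute)
      qed
    qed
  next
    assume "\<forall>x\<ge>0. ((\<lambda>y. \<Lambda> x y) \<longlongrightarrow> a * x) at_top"
    then have "((\<lambda>y. \<Lambda> 1 y) \<longlongrightarrow> a * 1) at_top" using spec[of _ 1] by (metis mult_1_right zero_le_one)
    then show "((\<lambda>y. \<Lambda> 1 y) \<longlongrightarrow> a) at_top" by simp
  qed
  show ?thesis using D R S by simp
qed

end
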